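(* Let $(A,\succ,\prec)$ be an anti-pre-Novikov algebra with associated Novikov algebra $(A,\circ)$, and let $s=\sum_i a_i\otimes b_i\in A\otimes A$ be skew-symmetric ($\tau(s)=-s$). The following are equivalent: (a) $s$ is a solution of the anti-pre-Novikov Yang–Baxter equation in $(A,\succ,\prec)$, i.e. $\sum_{i,j}a_i\circ a_j\otimes b_i\otimes b_j+\sum_{i,j}a_j\otimes a_i\otimes(b_i\odot b_j)+\sum_{i,j}a_i\otimes(b_i\prec a_j)\otimes b_j=0$; (b) $T_s$ is an $\mathcal O$-operator on $(A,\circ)$ associated to the representation $(A^*,-L_{\odot}^*,R_{\prec}^* )$; (c) $T_s$ is an $\mathcal O$-operator on $(A,\succ,\prec)$ associated to the representation $(A^*,-L_{\star}^*,-R_{\succ}^*,R_{\odot}^*,R_{\circ}^* )$.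
   Context: $A$ is finite-dimensional over a field $k$. An anti-pre-Novikov algebra is $(A,\succ,\prec)$ such that with $x\circ y=x\succ y+x\prec y$: $(x\circ y-y\circ x)\succ z=y\succ(x\succ z)-x\succ(y\succ z)$; $x\prec(y\circ z)=(y\succ x)\prec z-(x\prec y)\prec z-y\succ(x\prec z)$; $(x\circ y)\succ z=-(x\succ z)\prec y$; $(x\prec y)\prec z=(x\prec z)\prec y$; $(x\circ y-y\circ x)\prec z=x\succ(y\circ z)-y\succ(x\circ z)$; $(A,\circ)$ is then a Novikov algebra. Notation: $x\odot y=x\succ y+y\prec x$; $L_\ast(x)y=x\ast y$, $R_\ast(x)y=y\ast x$; $L_{\star}=L_{\circ}+R_{\circ}$, $L_{\odot}=L_{\succ}+R_{\prec}$, $R_{\odot}=R_{\succ}+L_{\prec}$; for $f:A\to\mathrm{End}(A)$, $\langle f^*(x)\zeta,y\rangle=-\langle\zeta,f(x)y\rangle$; $T_s:A^*\to A$, $\langle T_s(\zeta),\eta\rangle=\langle s,\zeta\otimes\eta\rangle$. An $\mathcal O$-operator on a Novikov algebra $(A,\circ)$ associated to a representation $(V,l,r)$ is a linear $T:V\to A$ with $T(u)\circ T(v)=T(l(T(u))v+r(T(v))u)$. An $\mathcal O$-operator on $(A,\succ,\prec)$ associated to a representation $(V,l_{\succ},r_{\succ},l_{\prec},r_{\prec})$ is a linear $T:V\to A$ with $T(u)\succ T(v)=T(l_{\succ}(T(u))v+r_{\succ}(T(v))u)$ and $T(u)\prec T(v)=T(l_{\prec}(T(u))v+r_{\prec}(T(v))u)$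 for all $u,v\in V$. (The tuples in (b),(c) are representations of $(A,\circ)$ and $(A,\succ,\prec)$ respectively.) *)

theory Defs
  imports Main "HOL-Library.Function_Algebras"
begin

text \<open>Coordinate model: a finite-dimensional vector space over the field 'k is
  modelled as 'n \<Rightarrow> 'k for a finite (index) type 'n (a basis).  The dual space
  A* is again 'n \<Rightarrow> 'k, with the natural pairing.  Tensors in A\<otimes>A
  (resp. A\<otimes>A\<otimes>A) are 'n \<Rightarrow> 'n \<Rightarrow> 'k (resp. with three indices).\<close>

type_synonym ('k, 'n) vsp = "'n \<Rightarrow> 'k"
type_synonym ('k, 'n) binop = "('k,'n) vsp \<Rightarrow> ('k,'n) vsp \<Rightarrow> ('k,'n) vsp"

definition smul :: "'k::field \<Rightarrow> ('k,'n) vsp \<Rightarrow> ('k,'n) vsp" where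
  "smul c x = (\<lambda>p. c * x p)"

definition bilinear_op :: "('k::field,'n) binop \<Rightarrow> bool" where
  "bilinear_op m \<longleftrightarrow>
     (\<forall>x y z. m (x + y) z = m x z + m y z \<and> m x (y + z) = m x y + m x z) \<and>
     (\<forall>c x y. m (smul c x) y = smul c (m x y) \<and> m x (smul c y) = smul c (m x y))"

definition circ_op :: "('k::field,'n) binop \<Rightarrow> ('k,'n) binop \<Rightarrow> ('k,'n) binop" where
  "circ_op sc pr x y = sc x y + pr x y"

definition anti_pre_Novikov :: "('k::field,'n) binop \<Rightarrow> ('k,'n) binop \<Rightarrow> bool" where
  "anti_pre_Novikov sc pr \<longleftrightarrow> bilinear_op sc \<and> bilinear_op pr \<and>
    (let ci = circ_op sc pr in
     (\<forall>x y z. sc (ci x y - ci y x) z = sc y (sc x z) - sc x (sc y z)) \<and>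
     (\<forall>x y z. pr x (ci y z) = pr (sc y x) z - pr (pr x y) z - sc y (pr x z)) \<and>
     (\<forall>x y z. sc (ci x y) z = - pr (sc x z) y) \<and>
     (\<forall>x y z. pr (pr x y) z = pr (pr x z) y) \<and>
     (\<forall>x y z. pr (ci x y - ci y x) z = sc x (ci y z) - sc y (ci x z)))"

definition odot_op :: "('k::field,'n) binop \<Rightarrow> ('k,'n) binop \<Rightarrow> ('k,'n) binop" where
  "odot_op sc pr x y = sc x y + pr y x"

definition pair :: "('k::field,'n::finite) vsp \<Rightarrow> ('k,'n) vsp \<Rightarrow> 'k" where
  "pair \<zeta> y = (\<Sum>p\<in>UNIV. \<zeta> p * y p)"

definition unitv :: "'n \<Rightarrow> ('k::field,'n) vsp" where
  "unitv q = (\<lambda>p. if p = q then 1 else 0)"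

text \<open>For f : A \<rightarrow> End(A) (given as f x y = f(x) y), the map f* : A \<rightarrow> End(A*)
  with <f*(x) \<zeta>, y> = - <\<zeta>, f(x) y>.\<close>
definition dual_map :: "('k::field,'n::finite) binop \<Rightarrow> ('k,'n) binop" where
  "dual_map f x \<zeta> = (\<lambda>q. - pair \<zeta> (f x (unitv q)))"

definition L_of :: "('k::field,'n) binop \<Rightarrow> ('k,'n) binop" where
  "L_of m x y = m x y"
definition R_of :: "('k::field,'n) binop \<Rightarrow> ('k,'n) binop" where
  "R_of m x y = m y x"

definition tensor2 :: "(('k::field,'n) vsp \<times> ('k,'n) vsp) list \<Rightarrow> 'n \<Rightarrow> 'n \<Rightarrow> 'k" where
  "tensor2 ss = (\<lambda>p q. \<Sum>(a,b)\<leftarrow>ss. a p * b q)"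

definition tens3 :: "('k::field,'n) vsp \<Rightarrow> ('k,'n) vsp \<Rightarrow> ('k,'n) vsp \<Rightarrow> 'n \<Rightarrow> 'n \<Rightarrow> 'n \<Rightarrow> 'k" where
  "tens3 x y z = (\<lambda>p q r. x p * y q * z r)"

definition skew_tensor :: "('n \<Rightarrow> 'n \<Rightarrow> 'k::field) \<Rightarrow> bool" where
  "skew_tensor s \<longleftrightarrow> (\<forall>p q. s q p = - s p q)"

definition T_of :: "('n::finite \<Rightarrow> 'n \<Rightarrow> 'k::field) \<Rightarrow> ('k,'n) vsp \<Rightarrow> ('k,'n) vsp" where
  "T_of s \<zeta> = (\<lambda>q. \<Sum>p\<in>UNIV. s p q * \<zeta> p)"

definition APN_YBE :: "('k::field,'n) binop \<Rightarrow> ('k,'n) binop \<Rightarrow> (('k,'n) vsp \<times> ('k,'n) vsp) list \<Rightarrow> bool" where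
  "APN_YBE sc pr ss \<longleftrightarrow>
     (\<lambda>p q r. (\<Sum>(a,b)\<leftarrow>ss. \<Sum>(a',b')\<leftarrow>ss. tens3 (circ_op sc pr a a') b b' p q r)
            + (\<Sum>(a,b)\<leftarrow>ss. \<Sum>(a',b')\<leftarrow>ss. tens3 a' a (odot_op sc pr b b') p q r)
            + (\<Sum>(a,b)\<leftarrow>ss. \<Sum>(a',b')\<leftarrow>ss. tens3 a (pr b a') b' p q r)) = (\<lambda>p q r. 0)"

definition O_op_Nov :: "('k::field,'n) binop \<Rightarrow> (('k,'n) vsp \<Rightarrow> 'v \<Rightarrow> 'v) \<Rightarrow> (('k,'n) vsp \<Rightarrow> 'v \<Rightarrow> 'v)
     \<Rightarrow> ('v::plus \<Rightarrow> ('k,'n) vsp) \<Rightarrow> bool" where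
  "O_op_Nov ci l r T \<longleftrightarrow> (\<forall>u v. ci (T u) (T v) = T (l (T u) v + r (T v) u))"

definition O_op_APN :: "('k::field,'n) binop \<Rightarrow> ('k,'n) binop
     \<Rightarrow> (('k,'n) vsp \<Rightarrow> 'v \<Rightarrow> 'v) \<Rightarrow> (('k,'n) vsp \<Rightarrow> 'v \<Rightarrow> 'v)
     \<Rightarrow> (('k,'n) vsp \<Rightarrow> 'v \<Rightarrow> 'v) \<Rightarrow> (('k,'n) vsp \<Rightarrow> 'v \<Rightarrow> 'v)
     \<Rightarrow> ('v::plus \<Rightarrow> ('k,'n) vsp) \<Rightarrow> bool" where
  "O_op_APN sc pr lsc rsc lpr rpr T \<longleftrightarrow>
     (\<forall>u v. sc (T u) (T v) = T (lsc (T u) v + rsc (T v) u)) \<and>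
     (\<forall>u v. pr (T u) (T v) = T (lpr (T u) v + rpr (T v) u))"

end

theory Submission
  imports Defs
begin

lemma smul_apply[simp]: "smul c x p = c * x p" by (simp add: smul_def)
lemma smul_add: "smul c (x + y) = smul c x + smul c y" by (rule ext) (simp add: algebra_simps)

lemma bil_add1: "bilinear_op m \<Longrightarrow> m (x+y) z = m x z + m y z" by (simp add: bilinear_op_def)
lemma bil_add2: "bilinear_op m \<Longrightarrow> m x (y+z) = m x y + m x z" by (simp add: bilinear_op_def)
lemma bil_smul1: "bilinear_op m \<Longrightarrow> m (smul c x) y = smul c (m x y)" by (simp add: bilinear_op_def)
lemma bil_smul2: "bilinear_op m \<Longrightarrow> m x (smul c y) = smul c (m x y)" by (simp add: bilinear_op_def)
lemma bil_zero1: "bilinear_op m \<Longrightarrow> m 0 y = 0"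
  using bil_add1[of m 0 0 y] by simp
lemma bil_zero2: "bilinear_op m \<Longrightarrow> m y 0 = 0"
  using bil_add2[of m y 0 0] by simp
lemma bil_neg1: "bilinear_op m \<Longrightarrow> m (-x) y = - m x y"
  using bil_add1[of m x "-x" y] bil_zero1[of m y] by (simp add: minus_unique)
lemma bil_neg2: "bilinear_op m \<Longrightarrow> m y (-x) = - m y x"
  using bil_add2[of m y x "-x"] bil_zero2[of m y] by (simp add: minus_unique)
lemma bil_list1: "bilinear_op m \<Longrightarrow> m (sum_list (map f xs)) y = sum_list (map (\<lambda>i. m (f i) y) xs)"
  by (induction xs) (simp_all only: list.map sum_list.Cons sum_list.Nil bil_zero1 bil_add1)
lemma bil_list2: "bilinear_op m \<Longrightarrow> m y (sum_list (map f xs)) = sum_list (map (\<lambda>i. m y (f i)) xs)"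
  by (induction xs) (simp_all only: list.map sum_list.Cons sum_list.Nil bil_zero2 bil_add2)
lemma bil_sum2: assumes "finite S" "bilinear_op m" shows "m y (sum f S) = (\<Sum>i\<in>S. m y (f i))"
  using assms(1)
proof (induction S rule: finite_induct)
  case empty then show ?case by (simp only: sum.empty bil_zero2[OF assms(2)])
next
  case (insert a F) then show ?case
    by (simp only: sum.insert[OF insert.hyps(1,2)] bil_add2[OF assms(2)] insert.IH)
qed

lemma bil_plus: "bilinear_op m1 \<Longrightarrow> bilinear_op m2 \<Longrightarrow> bilinear_op (\<lambda>a b. m1 a b + m2 a b)"
  unfolding bilinear_op_def by (simp add: smul_add algebra_simps)
lemma bil_R: "bilinear_op m \<Longrightarrow> bilinear_op (R_of m)"
  unfolding bilinear_op_def R_of_def by simp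
lemma bil_L: "bilinear_op m \<Longrightarrow> bilinear_op (L_of m)"
  unfolding bilinear_op_def L_of_def by simp
lemma bil_circ: "bilinear_op sc \<Longrightarrow> bilinear_op pr \<Longrightarrow> bilinear_op (circ_op sc pr)"
  using bil_plus[of sc pr] by (simp add: circ_op_def[abs_def])
lemma bil_odot: "bilinear_op sc \<Longrightarrow> bilinear_op pr \<Longrightarrow> bilinear_op (odot_op sc pr)"
  using bil_plus[of sc "R_of pr"] bil_R[of pr] by (simp add: odot_op_def[abs_def] R_of_def)

lemma sum_list_apply: "sum_list (map f xs) p = sum_list (map (\<lambda>i. f i p) xs)"
  by (induction xs) simp_all
lemma sum_apply: "finite S \<Longrightarrow> (sum f S) p = (\<Sum>i\<in>S. f i p)"
  by (induction S rule: finite_induct) simp_all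

lemma vec_decomp: "(x::('k::field,'n::finite) vsp) = (\<Sum>q\<in>UNIV. smul (x q) (unitv q))"
  by (rule ext) (simp add: sum_apply unitv_def if_distrib cong: if_cong)

lemma ite_mult1: "(if c then 1 else 0) * (a::'k::field) = (if c then a else 0)" by simp
lemma ite_mult2: "(a::'k::field) * (if c then 1 else 0) = (if c then a else 0)" by simp
lemma pair_unit1[simp]: "pair (unitv q) x = x q" by (simp add: pair_def unitv_def ite_mult1)
lemma pair_unit2[simp]: "pair x (unitv q) = x q" by (simp add: pair_def unitv_def if_distrib cong: if_cong)
lemma pair_comm: "pair x y = pair y x" by (simp add: pair_def mult.commute)
lemma pair_add1: "pair (x+y) z = pair x z + pair y z" by (simp add: pair_def algebra_simps sum.distrib)
lemma pair_add2: "pair z (x+y) = pair z x + pair z y" by (simp add: pair_def algebra_simps sum.distrib)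
lemma pair_neg1: "pair (-x) z = - pair x z" by (simp add: pair_def sum_negf)
lemma pair_neg2: "pair z (-x) = - pair z x" by (simp add: pair_def sum_negf)
lemma pair_smul1: "pair (smul c x) z = c * pair x z" by (simp add: pair_def sum_distrib_left algebra_simps)
lemma pair_smul2: "pair z (smul c x) = c * pair z x" by (simp add: pair_def sum_distrib_left algebra_simps)
lemma pair_sum2: assumes "finite S" shows "pair z (sum f S) = (\<Sum>i\<in>S. pair z (f i))"
  using assms
proof (induction S rule: finite_induct)
  case empty then show ?case by (simp add: pair_def)
next
  case (insert a F) then show ?case
    by (simp only: sum.insert[OF insert.hyps(1,2)] pair_add2 insert.IH)
qed

lemma vec_eq_pair: "(x = y) \<longleftrightarrow> (\<forall>\<xi>. pair \<xi> x = pair \<xi> y)"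
  by (metis ext pair_unit1)

lemma dual_pair: assumes "bilinear_op m"
  shows "pair (dual_map m x \<zeta>) y = - pair \<zeta> (m x y)"
proof -
  have "m x y = (\<Sum>q\<in>UNIV. smul (y q) (m x (unitv q)))"
    by (subst vec_decomp[of y]) (simp add: bil_sum2[OF _ assms] bil_smul2[OF assms])
  then have "pair \<zeta> (m x y) = (\<Sum>q\<in>UNIV. y q * pair \<zeta> (m x (unitv q)))"
    by (simp add: pair_sum2 pair_smul2)
  then show ?thesis by (simp add: dual_map_def pair_def sum_negf[symmetric] sum_distrib_left algebra_simps)
qed

lemma T_add: "T_of s (u+v) = T_of s u + T_of s v"
  by (rule ext) (simp add: T_of_def algebra_simps sum.distrib)
lemma T_smul: "T_of s (smul c u) = smul c (T_of s u)"
  by (rule ext) (simp add: T_of_def sum_distrib_left algebra_simps)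
lemma T_skew: assumes "skew_tensor s"
  shows "pair (T_of s w) \<xi> = - pair w (T_of s \<xi>)"
proof -
  have "pair (T_of s w) \<xi> = (\<Sum>q\<in>UNIV. \<Sum>p\<in>UNIV. s p q * w p * \<xi> q)"
    by (simp add: pair_def T_of_def sum_distrib_right)
  also have "\<dots> = (\<Sum>p\<in>UNIV. \<Sum>q\<in>UNIV. s p q * w p * \<xi> q)" by (rule sum.swap)
  also have "\<dots> = (\<Sum>p\<in>UNIV. \<Sum>q\<in>UNIV. - (w p * (s q p * \<xi> q)))"
  proof (intro sum.cong refl)
    fix p q
    have "s q p = - s p q" using assms unfolding skew_tensor_def by blast
    then show "s p q * w p * \<xi> q = - (w p * (s q p * \<xi> q))" by (simp add: mult_ac)
  qed
  also have "\<dots> = - pair w (T_of s \<xi>)"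
    by (simp add: pair_def T_of_def sum_distrib_left sum_negf)
  finally show ?thesis .
qed
lemma pairT: "skew_tensor s \<Longrightarrow> pair \<xi> (T_of s w) = - pair w (T_of s \<xi>)"
  by (metis pair_comm T_skew)

lemma lin_expand:
  assumes add: "\<And>x y. f (x+y) = f x + f y" and sm: "\<And>c x. f (smul c x) = c * f x"
  shows "f (x::('k::field,'n::finite) vsp) = (\<Sum>a\<in>UNIV. x a * f (unitv a))"
proof -
  have z: "f 0 = 0" using add[of 0 0] by (metis add_cancel_right_right add_0)
  have "\<And>S. finite S \<Longrightarrow> f (\<Sum>q\<in>S. smul (x q) (unitv q)) = (\<Sum>a\<in>S. x a * f (unitv a))"
  proof -
    fix S :: "'n set" assume "finite S"
    then show "f (\<Sum>q\<in>S. smul (x q) (unitv q)) = (\<Sum>a\<in>S. x a * f (unitv a))"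
    proof (induction S rule: finite_induct)
      case empty then show ?case by (simp only: sum.empty z)
    next
      case (insert a F)
      then show ?case by (simp only: sum.insert[OF insert.hyps(1,2)] add sm insert.IH)
    qed
  qed
  then have h: "f (\<Sum>q\<in>UNIV. smul (x q) (unitv q)) = (\<Sum>a\<in>UNIV. x a * f (unitv a))" by simp
  have "f x = f (\<Sum>q\<in>UNIV. smul (x q) (unitv q))" using vec_decomp[of x] by (rule arg_cong)
  also note h
  finally show ?thesis .
qed

lemma T_unit: "T_of s (unitv q) r = s q r"
  by (simp add: T_of_def unitv_def ite_mult2)

lemma sumA: "sum_list (map (\<lambda>i. smul (fst i q) (snd i)) ss) = T_of (tensor2 ss) (unitv q)"
  by (rule ext) (simp add: sum_list_apply T_unit tensor2_def split_def)
lemma sumB: assumes "skew_tensor (tensor2 ss)"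
  shows "sum_list (map (\<lambda>i. smul (snd i q) (fst i)) ss) = - T_of (tensor2 ss) (unitv q)"
proof (rule ext)
  fix r
  have "- T_of (tensor2 ss) (unitv q) r = tensor2 ss r q"
  proof -
    have "tensor2 ss r q = - tensor2 ss q r" using assms unfolding skew_tensor_def by blast
    then show ?thesis by (simp add: T_unit)
  qed
  moreover have "sum_list (map (\<lambda>i. smul (snd i q) (fst i)) ss) r = tensor2 ss r q"
    unfolding sum_list_apply tensor2_def split_def smul_apply by (simp only: mult.commute)
  ultimately show "sum_list (map (\<lambda>i. smul (snd i q) (fst i)) ss) r = (- T_of (tensor2 ss) (unitv q)) r"
    by simp
qed


definition GB where
  "GB sc pr s u v \<xi> = pair \<xi> (circ_op sc pr (T_of s u) (T_of s v))
     + pair v (odot_op sc pr (T_of s u) (T_of s \<xi>)) - pair u (pr (T_of s \<xi>) (T_of s v))"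
definition GC1 where
  "GC1 sc pr s u v \<xi> = pair \<xi> (sc (T_of s u) (T_of s v))
     + pair v (circ_op sc pr (T_of s u) (T_of s \<xi>) + circ_op sc pr (T_of s \<xi>) (T_of s u))
     + pair u (sc (T_of s \<xi>) (T_of s v))"
definition GC2 where
  "GC2 sc pr s u v \<xi> = pair \<xi> (pr (T_of s u) (T_of s v))
     - pair v (sc (T_of s \<xi>) (T_of s u) + pr (T_of s u) (T_of s \<xi>))
     - pair u (circ_op sc pr (T_of s \<xi>) (T_of s v))"

lemma comb:
  shows "GC1 sc pr s u v \<xi> = GB sc pr s \<xi> u v + GB sc pr s u \<xi> v"
    and "GC2 sc pr s u v \<xi> = GB sc pr s u v \<xi> - GC1 sc pr s u v \<xi>"
  by (simp_all add: GB_def GC1_def GC2_def circ_op_def odot_op_def pair_add2 pair_comm algebra_simps)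

lemma eq_diff: "(a::'k::field) = b \<longleftrightarrow> a - b = 0" by simp
lemma eqA: "(a::'k::field) = -x + y \<longleftrightarrow> a + x - y = 0" by (auto simp: algebra_simps)
lemma eqB: "(a::'k::field) = -x - y \<longleftrightarrow> a + x + y = 0"
proof -
  have "-x - y = -(x+y)" by simp
  then have "a = -x - y \<longleftrightarrow> a = -(x+y)" by simp
  also have "\<dots> \<longleftrightarrow> a + (x+y) = 0" by (rule eq_neg_iff_add_eq_0)
  finally show ?thesis by (simp add: add.assoc)
qed
lemma eqC: "(a::'k::field) = x + y \<longleftrightarrow> a - x - y = 0" by (auto simp: algebra_simps)

lemma nov_iff:
  assumes sc: "bilinear_op sc" and pr: "bilinear_op pr" and sk: "skew_tensor s"
  shows "O_op_Nov (circ_op sc pr)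
             (\<lambda>x. - dual_map (L_of (odot_op sc pr)) x)
             (dual_map (R_of pr)) (T_of s) \<longleftrightarrow> (\<forall>u v \<xi>. GB sc pr s u v \<xi> = 0)"
proof -
  have od: "bilinear_op (L_of (odot_op sc pr))" by (rule bil_L[OF bil_odot[OF sc pr]])
  have rp: "bilinear_op (R_of pr)" by (rule bil_R[OF pr])
  have key: "(circ_op sc pr (T_of s u) (T_of s v) = T_of s ((\<lambda>x. - dual_map (L_of (odot_op sc pr)) x) (T_of s u) v + dual_map (R_of pr) (T_of s v) u))
     \<longleftrightarrow> (\<forall>\<xi>. GB sc pr s u v \<xi> = 0)" for u v
  proof -
    have h: "pair \<xi> (T_of s ((\<lambda>x. - dual_map (L_of (odot_op sc pr)) x) (T_of s u) v + dual_map (R_of pr) (T_of s v) u))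
        = - pair v (odot_op sc pr (T_of s u) (T_of s \<xi>)) + pair u (pr (T_of s \<xi>) (T_of s v))" for \<xi>
      by (subst pairT[OF sk]) (simp only: pair_add1 pair_neg1 uminus_apply dual_pair[OF od] dual_pair[OF rp], simp add: L_of_def R_of_def)
    show ?thesis
      unfolding vec_eq_pair h GB_def eqA by (simp only: add_diff_eq)
  qed
  show ?thesis unfolding O_op_Nov_def using key by blast
qed

lemma apn_iff:
  assumes sc: "bilinear_op sc" and pr: "bilinear_op pr" and sk: "skew_tensor s"
  shows "O_op_APN sc pr
             (\<lambda>x. - dual_map (\<lambda>a b. L_of (circ_op sc pr) a b + R_of (circ_op sc pr) a b) x)
             (\<lambda>x. - dual_map (R_of sc) x)
             (dual_map (\<lambda>a b. R_of sc a b + L_of pr a b))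
             (dual_map (R_of (circ_op sc pr)))
             (T_of s) \<longleftrightarrow> (\<forall>u v \<xi>. GC1 sc pr s u v \<xi> = 0) \<and> (\<forall>u v \<xi>. GC2 sc pr s u v \<xi> = 0)"
proof -
  have ci: "bilinear_op (circ_op sc pr)" by (rule bil_circ[OF sc pr])
  have b1: "bilinear_op (\<lambda>a b. L_of (circ_op sc pr) a b + R_of (circ_op sc pr) a b)"
    by (rule bil_plus[OF bil_L[OF ci] bil_R[OF ci]])
  have b2: "bilinear_op (R_of sc)" by (rule bil_R[OF sc])
  have b3: "bilinear_op (\<lambda>a b. R_of sc a b + L_of pr a b)" by (rule bil_plus[OF bil_R[OF sc] bil_L[OF pr]])
  have b4: "bilinear_op (R_of (circ_op sc pr))" by (rule bil_R[OF ci])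
  have k1: "(sc (T_of s u) (T_of s v) = T_of s ((\<lambda>x. - dual_map (\<lambda>a b. L_of (circ_op sc pr) a b + R_of (circ_op sc pr) a b) x) (T_of s u) v + (\<lambda>x. - dual_map (R_of sc) x) (T_of s v) u))
     \<longleftrightarrow> (\<forall>\<xi>. GC1 sc pr s u v \<xi> = 0)" for u v
  proof -
    have h: "pair \<xi> (T_of s ((\<lambda>x. - dual_map (\<lambda>a b. L_of (circ_op sc pr) a b + R_of (circ_op sc pr) a b) x) (T_of s u) v + (\<lambda>x. - dual_map (R_of sc) x) (T_of s v) u))
        = - pair v (circ_op sc pr (T_of s u) (T_of s \<xi>) + circ_op sc pr (T_of s \<xi>) (T_of s u)) - pair u (sc (T_of s \<xi>) (T_of s v))" for \<xi>
      by (subst pairT[OF sk]) (simp only: pair_add1 pair_neg1 uminus_apply dual_pair[OF b1] dual_pair[OF b2], simp add: L_of_def R_of_def)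
    show ?thesis
      unfolding vec_eq_pair h GC1_def eqB by (simp only:)
  qed
  have k2: "(pr (T_of s u) (T_of s v) = T_of s (dual_map (\<lambda>a b. R_of sc a b + L_of pr a b) (T_of s u) v + dual_map (R_of (circ_op sc pr)) (T_of s v) u))
     \<longleftrightarrow> (\<forall>\<xi>. GC2 sc pr s u v \<xi> = 0)" for u v
  proof -
    have h: "pair \<xi> (T_of s (dual_map (\<lambda>a b. R_of sc a b + L_of pr a b) (T_of s u) v + dual_map (R_of (circ_op sc pr)) (T_of s v) u))
        = pair v (sc (T_of s \<xi>) (T_of s u) + pr (T_of s u) (T_of s \<xi>)) + pair u (circ_op sc pr (T_of s \<xi>) (T_of s v))" for \<xi>
      by (subst pairT[OF sk]) (simp only: pair_add1 pair_neg1 uminus_apply dual_pair[OF b3] dual_pair[OF b4], simp add: L_of_def R_of_def)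
    show ?thesis
      unfolding vec_eq_pair h GC2_def eqC by (simp only:)
  qed
  show ?thesis unfolding O_op_APN_def using k1 k2 by blast
qed

lemma GB_lin:
  assumes sc: "bilinear_op sc" and pr: "bilinear_op pr"
  shows "GB sc pr s (x+y) v w = GB sc pr s x v w + GB sc pr s y v w"
    "GB sc pr s (smul c x) v w = c * GB sc pr s x v w"
    "GB sc pr s u (x+y) w = GB sc pr s u x w + GB sc pr s u y w"
    "GB sc pr s u (smul c x) w = c * GB sc pr s u x w"
    "GB sc pr s u v (x+y) = GB sc pr s u v x + GB sc pr s u v y"
    "GB sc pr s u v (smul c x) = c * GB sc pr s u v x"
proof -
  have ci: "bilinear_op (circ_op sc pr)" by (rule bil_circ[OF sc pr])
  have od: "bilinear_op (odot_op sc pr)" by (rule bil_odot[OF sc pr])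
  note L = T_add T_smul bil_add1[OF ci] bil_add2[OF ci] bil_smul1[OF ci] bil_smul2[OF ci]
    bil_add1[OF od] bil_add2[OF od] bil_smul1[OF od] bil_smul2[OF od]
    bil_add1[OF pr] bil_add2[OF pr] bil_smul1[OF pr] bil_smul2[OF pr]
    pair_add1 pair_add2 pair_smul1 pair_smul2
  show "GB sc pr s (x+y) v w = GB sc pr s x v w + GB sc pr s y v w"
    "GB sc pr s (smul c x) v w = c * GB sc pr s x v w"
    "GB sc pr s u (x+y) w = GB sc pr s u x w + GB sc pr s u y w"
    "GB sc pr s u (smul c x) w = c * GB sc pr s u x w"
    "GB sc pr s u v (x+y) = GB sc pr s u v x + GB sc pr s u v y"
    "GB sc pr s u v (smul c x) = c * GB sc pr s u v x"
    by (simp_all only: GB_def L) (simp_all add: algebra_simps)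
qed

lemma GB_vanish:
  assumes sc: "bilinear_op sc" and pr: "bilinear_op pr"
    and h: "\<forall>p q r. GB sc pr s (unitv q) (unitv r) (unitv p) = 0"
  shows "GB sc pr s u v w = 0"
proof -
  note G = GB_lin[OF sc pr]
  have "\<And>a b. GB sc pr s (unitv a) (unitv b) w = 0"
    by (subst lin_expand[where f="\<lambda>w. GB sc pr s _ _ w"]) (simp_all add: G h)
  then have "\<And>a. GB sc pr s (unitv a) v w = 0"
    by (subst lin_expand[where f="\<lambda>v. GB sc pr s _ v w"]) (simp_all add: G)
  then show ?thesis
    by (subst lin_expand[where f="\<lambda>u. GB sc pr s u v w"]) (simp_all add: G)
qed

lemma ybe_iff:
  assumes sc: "bilinear_op sc" and pr: "bilinear_op pr" and sk: "skew_tensor (tensor2 ss)"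
  shows "APN_YBE sc pr ss \<longleftrightarrow> (\<forall>p q r. GB sc pr (tensor2 ss) (unitv q) (unitv r) (unitv p) = 0)"
proof -
  have ci: "bilinear_op (circ_op sc pr)" by (rule bil_circ[OF sc pr])
  have od: "bilinear_op (odot_op sc pr)" by (rule bil_odot[OF sc pr])
  have t1: "(\<Sum>(a,b)\<leftarrow>ss. \<Sum>(a',b')\<leftarrow>ss. tens3 (circ_op sc pr a a') b b' p q r)
      = circ_op sc pr (T_of (tensor2 ss) (unitv q)) (T_of (tensor2 ss) (unitv r)) p" for p q r
  proof -
    have "circ_op sc pr (T_of (tensor2 ss) (unitv q)) (T_of (tensor2 ss) (unitv r))
      = circ_op sc pr (sum_list (map (\<lambda>i. smul (snd i q) (fst i)) ss)) (sum_list (map (\<lambda>i. smul (snd i r) (fst i)) ss))"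
      by (simp only: sumB[OF sk] bil_neg1[OF ci] bil_neg2[OF ci] minus_minus)
    note e = this
    show ?thesis
      apply (subst e)
      apply (subst bil_list1[OF ci])
      apply (simp only: bil_list2[OF ci] bil_smul1[OF ci] bil_smul2[OF ci])
      by (simp only: tens3_def split_def sum_list_apply smul_apply mult_ac)
  qed
  have t2: "(\<Sum>(a,b)\<leftarrow>ss. \<Sum>(a',b')\<leftarrow>ss. tens3 a' a (odot_op sc pr b b') p q r)
      = odot_op sc pr (T_of (tensor2 ss) (unitv q)) (T_of (tensor2 ss) (unitv p)) r" for p q r
  proof -
    have "odot_op sc pr (T_of (tensor2 ss) (unitv q)) (T_of (tensor2 ss) (unitv p))
      = odot_op sc pr (sum_list (map (\<lambda>i. smul (fst i q) (snd i)) ss)) (sum_list (map (\<lambda>i. smul (fst i p) (snd i)) ss))"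
      by (simp only: sumA)
    note e = this
    show ?thesis
      apply (subst e)
      apply (subst bil_list1[OF od])
      apply (simp only: bil_list2[OF od] bil_smul1[OF od] bil_smul2[OF od])
      by (simp only: tens3_def split_def sum_list_apply smul_apply mult_ac)
  qed
  have t3: "(\<Sum>(a,b)\<leftarrow>ss. \<Sum>(a',b')\<leftarrow>ss. tens3 a (pr b a') b' p q r)
      = - pr (T_of (tensor2 ss) (unitv p)) (T_of (tensor2 ss) (unitv r)) q" for p q r
  proof -
    have "- pr (T_of (tensor2 ss) (unitv p)) (T_of (tensor2 ss) (unitv r))
      = pr (sum_list (map (\<lambda>i. smul (fst i p) (snd i)) ss)) (sum_list (map (\<lambda>i. smul (snd i r) (fst i)) ss))"
      by (simp only: sumA sumB[OF sk] bil_neg2[OF pr])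
    then have e0: "(- pr (T_of (tensor2 ss) (unitv p)) (T_of (tensor2 ss) (unitv r))) q
      = pr (sum_list (map (\<lambda>i. smul (fst i p) (snd i)) ss)) (sum_list (map (\<lambda>i. smul (snd i r) (fst i)) ss)) q"
      by (rule fun_cong)
    then have e: "- pr (T_of (tensor2 ss) (unitv p)) (T_of (tensor2 ss) (unitv r)) q
      = pr (sum_list (map (\<lambda>i. smul (fst i p) (snd i)) ss)) (sum_list (map (\<lambda>i. smul (snd i r) (fst i)) ss)) q"
      by (simp only: uminus_apply)
    show ?thesis
      apply (subst e)
      apply (subst bil_list1[OF pr])
      apply (simp only: bil_list2[OF pr] bil_smul1[OF pr] bil_smul2[OF pr])
      by (simp only: tens3_def split_def sum_list_apply smul_apply mult_ac)
  qed
  show ?thesis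
    unfolding APN_YBE_def fun_eq_iff
    apply (simp only: t1)
    apply (simp only: t2 t3 GB_def pair_unit1 diff_conv_add_uminus)
    done
qed

theorem mainTheorem7:
  fixes sc pr :: "('k::field, 'n::finite) binop"
    and ss :: "(('k,'n) vsp \<times> ('k,'n) vsp) list"
  assumes "anti_pre_Novikov sc pr"
    and "skew_tensor (tensor2 ss)"
  shows "(APN_YBE sc pr ss \<longleftrightarrow>
           O_op_Nov (circ_op sc pr)
             (\<lambda>x. - dual_map (L_of (odot_op sc pr)) x)
             (dual_map (R_of pr))
             (T_of (tensor2 ss)))
       \<and> (O_op_Nov (circ_op sc pr)
             (\<lambda>x. - dual_map (L_of (odot_op sc pr)) x)
             (dual_map (R_of pr))
             (T_of (tensor2 ss))
          \<longleftrightarrow>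
          O_op_APN sc pr
             (\<lambda>x. - dual_map (\<lambda>a b. L_of (circ_op sc pr) a b + R_of (circ_op sc pr) a b) x)
             (\<lambda>x. - dual_map (R_of sc) x)
             (dual_map (\<lambda>a b. R_of sc a b + L_of pr a b))
             (dual_map (R_of (circ_op sc pr)))
             (T_of (tensor2 ss)))"
proof -
  have sc: "bilinear_op sc" and pr: "bilinear_op pr"
    using assms(1) unfolding anti_pre_Novikov_def by auto
  note sk = assms(2)
  have allB: "(\<forall>p q r. GB sc pr (tensor2 ss) (unitv q) (unitv r) (unitv p) = 0)
      \<longleftrightarrow> (\<forall>u v w. GB sc pr (tensor2 ss) u v w = 0)"
    using GB_vanish[OF sc pr] by blast
  have BC: "(\<forall>u v w. GB sc pr (tensor2 ss) u v w = 0) \<longleftrightarrow>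
      (\<forall>u v w. GC1 sc pr (tensor2 ss) u v w = 0) \<and> (\<forall>u v w. GC2 sc pr (tensor2 ss) u v w = 0)"
  proof (intro iffI conjI allI)
    fix u v w
    assume h: "\<forall>u v w. GB sc pr (tensor2 ss) u v w = 0"
    show "GC1 sc pr (tensor2 ss) u v w = 0" unfolding comb(1) using h by simp
    show "GC2 sc pr (tensor2 ss) u v w = 0" unfolding comb(2) comb(1) using h by simp
  next
    fix u v w
    assume h: "(\<forall>u v w. GC1 sc pr (tensor2 ss) u v w = 0) \<and> (\<forall>u v w. GC2 sc pr (tensor2 ss) u v w = 0)"
    have "GB sc pr (tensor2 ss) u v w = GC2 sc pr (tensor2 ss) u v w + GC1 sc pr (tensor2 ss) u v w"
      unfolding comb(2) by simp
    then show "GB sc pr (tensor2 ss) u v w = 0" using h by simp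
  qed
  show ?thesis
    unfolding ybe_iff[OF sc pr sk] nov_iff[OF sc pr sk] apn_iff[OF sc pr sk] allB BC by blast
qed

end
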